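(* Let $\gamma:\pi\to\pi'$ be an arrow of some Rauzy class on the alphabet $\mathcal{A}$. Then $Q_{\pi'}(u)=Q_\pi(u\overline{B}_\gamma)$ for every $u\in(\mathbb{Z}/2\mathbb{Z})^{\mathcal{A}}$.
   Context: Permutations $\pi=(\pi_{\mathrm t},\pi_{\mathrm b})$ are pairs of bijections $\mathcal{A}\to\{1,\dots,d\}$, $d\ge3$, irreducible and nondegenerate; $\alpha_{\varepsilon,j}=\pi_\varepsilon^{-1}(j)$. Rauzy induction: the top operation, with $\alpha_{\mathrm b,k}=\alpha_{\mathrm t,d}$, replaces the bottom row by $\alpha_{\mathrm b,1},\dots,\alpha_{\mathrm b,k},\alpha_{\mathrm b,d},\alpha_{\mathrm b,k+1},\dots,\alpha_{\mathrm b,d-1}$ (winner $\alpha_{\mathrm t,d}$, loser $\alpha_{\mathrm b,d}$); the bottom operation, with $\alpha_{\mathrm t,k}=\alpha_{\mathrm b,d}$, replaces the top row by $\alpha_{\mathrm t,1},\dots,\alpha_{\mathrm t,k},\alpha_{\mathrm t,d},\alpha_{\mathrm t,k+1},\dots,\alpha_{\mathrm t,d-1}$ (winner $\alpha_{\mathrm b,d}$, loser $\alpha_{\mathrm t,d}$). An arrow $\gamma:\pi\to\pi'$ is one such operation, and $B_\gamma=\mathrm{Id}+E_{\alpha_{\mathrm l}\alpha_{\mathrm w}}$ with $\alpha_{\mathrm w},\alpha_{\mathrm l}$ its winner and loser. $(\Omega_\pi)_{\alpha\beta}=+1$ if $\pi_{\mathrm t}(\alpha)<\pi_{\mathrm t}(\beta)$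 and $\pi_{\mathrm b}(\alpha)>\pi_{\mathrm b}(\beta)$, $-1$ if the reverse inequalities hold, $0$ otherwise. A bar denotes reduction mod 2. $Q_\pi(u)=\sum_{\pi_{\mathrm t}(\alpha)<\pi_{\mathrm t}(\beta)}u_\alpha(\Omega_\pi)_{\alpha\beta}u_\beta+\sum_\alpha u_\alpha\bmod 2$ for $u\in(\mathbb{Z}/2\mathbb{Z})^{\mathcal{A}}$; vectors act on matrices from the left (row vectors). *)

theory Defs
  imports Main "HOL-Library.Numeral_Type"
begin

text \<open>A permutation pi = (pi_t, pi_b) on the finite alphabet 'a: two bijections onto {1..d}, d = CARD('a).\<close>
type_synonym 'a perm2 = "('a \<Rightarrow> nat) \<times> ('a \<Rightarrow> nat)"

definition is_perm2 :: "'a::finite perm2 \<Rightarrow> bool" where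
  "is_perm2 p \<longleftrightarrow> bij_betw (fst p) UNIV {1..CARD('a)} \<and> bij_betw (snd p) UNIV {1..CARD('a)}"

definition irreducible2 :: "'a::finite perm2 \<Rightarrow> bool" where
  "irreducible2 p \<longleftrightarrow> (\<forall>k. 1 \<le> k \<and> k < CARD('a) \<longrightarrow>
      {a. fst p a \<le> k} \<noteq> {a. snd p a \<le> k})"

definition letter :: "('a \<Rightarrow> nat) \<Rightarrow> nat \<Rightarrow> 'a" where
  "letter f j = (THE a. f a = j)"

text \<open>Insert the letter at position d right after position k, shifting k+1..d-1 by one.\<close>
definition rauzy_row :: "nat \<Rightarrow> nat \<Rightarrow> ('a \<Rightarrow> nat) \<Rightarrow> 'a \<Rightarrow> nat" where
  "rauzy_row d k f b = (if f b \<le> k then f b else if f b = d then k + 1 else f b + 1)"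

definition rauzy_top :: "'a::finite perm2 \<Rightarrow> 'a perm2" where
  "rauzy_top p = (fst p,
     rauzy_row CARD('a) (snd p (letter (fst p) CARD('a))) (snd p))"

definition rauzy_bot :: "'a::finite perm2 \<Rightarrow> 'a perm2" where
  "rauzy_bot p = (rauzy_row CARD('a) (fst p (letter (snd p) CARD('a))) (fst p), snd p)"

definition rauzy_arrow :: "'a::finite perm2 \<Rightarrow> 'a perm2 \<Rightarrow> 'a \<Rightarrow> 'a \<Rightarrow> bool" where
  "rauzy_arrow p p' w l \<longleftrightarrow>
     (p' = rauzy_top p \<and> w = letter (fst p) CARD('a) \<and> l = letter (snd p) CARD('a)) \<or>
     (p' = rauzy_bot p \<and> w = letter (snd p) CARD('a) \<and> l = letter (fst p) CARD('a))"

definition Bmat :: "'a \<Rightarrow> 'a \<Rightarrow> 'a \<Rightarrow> 'a \<Rightarrow> int" where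
  "Bmat w l a b = (if a = b then 1 else 0) + (if a = l \<and> b = w then 1 else 0)"

definition mod2_mat :: "('a \<Rightarrow> 'a \<Rightarrow> int) \<Rightarrow> 'a \<Rightarrow> 'a \<Rightarrow> 2" where
  "mod2_mat M a b = of_int (M a b)"

definition vecmat :: "('a::finite \<Rightarrow> 2) \<Rightarrow> ('a \<Rightarrow> 'a \<Rightarrow> 2) \<Rightarrow> 'a \<Rightarrow> 2" where
  "vecmat u M b = (\<Sum>a\<in>UNIV. u a * M a b)"

definition Omega :: "'a perm2 \<Rightarrow> 'a \<Rightarrow> 'a \<Rightarrow> int" where
  "Omega p a b = (if fst p a < fst p b \<and> snd p a > snd p b then 1
                  else if fst p a > fst p b \<and> snd p a < snd p b then -1 else 0)"

definition Qform :: "'a::finite perm2 \<Rightarrow> ('a \<Rightarrow> 2) \<Rightarrow> 2" where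
  "Qform p u = (\<Sum>(a, b)\<in>{(a, b). fst p a < fst p b}. u a * of_int (Omega p a b) * u b)
               + (\<Sum>a\<in>UNIV. u a)"

end

theory Submission
  imports Defs
begin
lemma two_cases: "(x::2) = 0 \<or> x = 1"
proof (cases x)
  case (of_int z)
  then have "z < 2" by simp
  then have "z = 0 \<or> z = 1" using of_int by arith
  then show ?thesis using of_int by auto
qed
lemma two_add_self[simp]: "(x::2) + x = 0"
  using two_cases[of x] by auto
lemma two_mult_self[simp]: "(x::2) * x = x"
  using two_cases[of x] by auto

lemma two_eq0[simp]: "(2::2) = 0" by (metis one_add_one two_add_self)

definition crossQ :: "('a::finite \<Rightarrow> nat) \<Rightarrow> ('a \<Rightarrow> nat) \<Rightarrow> ('a \<Rightarrow> 2) \<Rightarrow> 2" where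
  "crossQ T G u = (\<Sum>a\<in>UNIV. \<Sum>b\<in>UNIV. of_bool (T a < T b \<and> G b < G a) * u a * u b) + (\<Sum>a\<in>UNIV. u a)"

lemma Qform_cross: "Qform p u = crossQ (fst p) (snd p) u"
proof -
  have "(\<Sum>a\<in>UNIV. \<Sum>b\<in>UNIV. of_bool (fst p a < fst p b \<and> snd p b < snd p a) * u a * u b)
      = (\<Sum>(a,b)\<in>UNIV. (of_bool (fst p a < fst p b \<and> snd p b < snd p a) * u a * u b :: 2))"
    by (simp add: sum.cartesian_product)
  also have "\<dots> = (\<Sum>(a, b)\<in>{(a, b). fst p a < fst p b}. u a * of_int (Omega p a b) * u b)"
    by (rule sum.mono_neutral_cong_right) (auto simp: Omega_def of_bool_def split: if_splits)
  finally show ?thesis unfolding Qform_def crossQ_def by simp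
qed

lemma crossQ_sym: "crossQ T G u = crossQ G T u"
  unfolding crossQ_def
  by (subst sum.swap) (simp add: ac_simps conj_commute)

lemma letter_val:
  assumes "bij_betw T (UNIV::'a set) {1..n}" "j \<in> {1..n}"
  shows "T (letter T j) = j"
proof -
  from assms obtain a where a: "T a = j" by (metis bij_betw_iff_bijections UNIV_I)
  have "\<exists>!a. T a = j" using a assms(1) unfolding bij_betw_def inj_on_def by auto
  then show ?thesis unfolding letter_def by (rule theI')
qed

lemma vec_val: "vecmat u (mod2_mat (Bmat w l)) x = u x + (if x = w then u l else 0)"
proof -
  have "vecmat u (mod2_mat (Bmat w l)) x = (\<Sum>a\<in>UNIV. (if a = x then u a else 0) + (if a = l \<and> x = w then u a else 0))"
    unfolding vecmat_def mod2_mat_def Bmat_def by (rule sum.cong) auto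
  also have "\<dots> = u x + (if x = w then u l else 0)"
    by (simp add: sum.distrib)
  finally show ?thesis .
qed
lemma main_generic:
  fixes T G :: "'a::finite \<Rightarrow> nat" and u :: "'a \<Rightarrow> 2"
  assumes bT: "bij_betw T UNIV {1..CARD('a)}" and bG: "bij_betw G UNIV {1..CARD('a)}"
    and w: "w = letter T CARD('a)" and l: "l = letter G CARD('a)" and wl: "w \<noteq> l"
  shows "crossQ T (rauzy_row CARD('a) (G w) G) u = crossQ T G (vecmat u (mod2_mat (Bmat w l)))"
proof -
  define d where "d = CARD('a)"
  define k where "k = G w"
  define G' where "G' = rauzy_row d k G"
  define c where "c = u l"
  define v where "v = vecmat u (mod2_mat (Bmat w l))"
  have d1: "1 \<le> d" unfolding d_def by (simp add: Suc_leI)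
  have Tw: "T w = d" using letter_val[OF bT] d1 unfolding w d_def by auto
  have Gl: "G l = d" using letter_val[OF bG] d1 unfolding l d_def by auto
  have Tr: "T a \<le> d" "1 \<le> T a" for a using bT unfolding d_def bij_betw_def by auto
  have Gr: "G a \<le> d" "1 \<le> G a" for a using bG unfolding d_def bij_betw_def by auto
  have Ti: "T a = T b \<longleftrightarrow> a = b" for a b using bT unfolding bij_betw_def inj_on_def by auto
  have Gi: "G a = G b \<longleftrightarrow> a = b" for a b using bG unfolding bij_betw_def inj_on_def by auto
  have GD: "G a = d \<longleftrightarrow> a = l" for a using Gi Gl by metis
  have TD: "T a = d \<longleftrightarrow> a = w" for a using Ti Tw by metis
  have kd: "k < d" unfolding k_def using Gr[of w] GD[of w] wl by auto
  have vv: "v x = u x + (if x = w then c else 0)" for x unfolding v_def c_def by (rule vec_val)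
  have key1: "(of_bool (T a < T b \<and> G' b < G' a) :: 2) =
     of_bool (T a < T b \<and> G b < G a) + of_bool (a = l \<and> b \<noteq> l \<and> T l < T b \<and> k < G b)
     + of_bool (b = l \<and> a \<noteq> l \<and> T a < T l \<and> k < G a)" for a b
  proof -
    have "G a \<noteq> d \<Longrightarrow> G a < d" "G b \<noteq> d \<Longrightarrow> G b < d" using Gr[of a] Gr[of b] by auto
    then show ?thesis unfolding G'_def rauzy_row_def
      using GD[of a] GD[of b] kd Gi[of a b] by (auto simp: Ti)
  qed
  have key2: "of_bool (T a < T b \<and> G b < G a) * v a * v b =
     of_bool (T a < T b \<and> G b < G a) * u a * u b + (if b = w then of_bool (k < G a) * c * u a else 0)" for a b
  proof (cases "a = w")
    case True
    then show ?thesis using Tw Tr[of b] k_def by (auto simp: vv)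
  next
    case False
    then have "T a < d" using Tr[of a] TD[of a] by auto
    then show ?thesis using False Tw k_def by (auto simp: vv algebra_simps)
  qed
  have rowL: "(\<Sum>b\<in>UNIV. of_bool (T a < T b \<and> G' b < G' a) * u a * u b) =
      (\<Sum>b\<in>UNIV. of_bool (T a < T b \<and> G b < G a) * u a * u b)
      + (if a = l then (\<Sum>b\<in>UNIV. of_bool (b \<noteq> l \<and> T l < T b \<and> k < G b) * u l * u b) else 0)
      + of_bool (a \<noteq> l \<and> T a < T l \<and> k < G a) * u a * u l" for a
  proof -
    have "(\<Sum>b\<in>UNIV. of_bool (T a < T b \<and> G' b < G' a) * u a * u b) =
      (\<Sum>b\<in>UNIV. of_bool (T a < T b \<and> G b < G a) * u a * u b)
      + (\<Sum>b\<in>UNIV. of_bool (a = l \<and> b \<noteq> l \<and> T l < T b \<and> k < G b) * u a * u b)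
      + (\<Sum>b\<in>UNIV. of_bool (b = l \<and> a \<noteq> l \<and> T a < T l \<and> k < G a) * u a * u b)"
      unfolding key1 by (simp add: sum.distrib algebra_simps)
    moreover have "(\<Sum>b\<in>UNIV. of_bool (a = l \<and> b \<noteq> l \<and> T l < T b \<and> k < G b) * u a * u b)
       = (if a = l then (\<Sum>b\<in>UNIV. of_bool (b \<noteq> l \<and> T l < T b \<and> k < G b) * u l * u b) else 0)"
      by auto
    moreover have "(\<Sum>b\<in>UNIV. of_bool (b = l \<and> a \<noteq> l \<and> T a < T l \<and> k < G a) * u a * u b)
       = (\<Sum>b\<in>UNIV. if b = l then of_bool (a \<noteq> l \<and> T a < T l \<and> k < G a) * u a * u l else 0)"
      by (rule sum.cong) auto
    ultimately show ?thesis by simp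
  qed
  define A where "A = (\<Sum>b\<in>UNIV. of_bool (b \<noteq> l \<and> T l < T b \<and> k < G b) * u l * u b)"
  define B where "B = (\<Sum>a\<in>UNIV. of_bool (a \<noteq> l \<and> T a < T l \<and> k < G a) * u a * u l)"
  have L: "(\<Sum>a\<in>UNIV. \<Sum>b\<in>UNIV. of_bool (T a < T b \<and> G' b < G' a) * u a * u b) =
     (\<Sum>a\<in>UNIV. \<Sum>b\<in>UNIV. of_bool (T a < T b \<and> G b < G a) * u a * u b) + A + B"
    unfolding rowL A_def B_def by (simp add: sum.distrib)
  have R: "(\<Sum>a\<in>UNIV. \<Sum>b\<in>UNIV. of_bool (T a < T b \<and> G b < G a) * v a * v b) =
     (\<Sum>a\<in>UNIV. \<Sum>b\<in>UNIV. of_bool (T a < T b \<and> G b < G a) * u a * u b)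
     + (\<Sum>a\<in>UNIV. of_bool (k < G a) * c * u a)"
    unfolding key2 by (simp add: sum.distrib)
  have sv: "(\<Sum>a\<in>UNIV. v a) = (\<Sum>a\<in>UNIV. u a) + c"
    unfolding vv by (simp add: sum.distrib)
  have AB: "A + B = (\<Sum>x\<in>UNIV. of_bool (x \<noteq> l \<and> k < G x) * c * u x)"
  proof -
    have "A + B = (\<Sum>x\<in>UNIV. of_bool (x \<noteq> l \<and> T l < T x \<and> k < G x) * u l * u x
        + of_bool (x \<noteq> l \<and> T x < T l \<and> k < G x) * u x * u l)"
      unfolding A_def B_def by (simp add: sum.distrib)
    also have "\<dots> = (\<Sum>x\<in>UNIV. of_bool (x \<noteq> l \<and> k < G x) * c * u x)"
    proof (rule sum.cong)
      fix x
      have "x \<noteq> l \<Longrightarrow> T l < T x \<or> T x < T l" using Ti[of x l] by linarith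
      then show "of_bool (x \<noteq> l \<and> T l < T x \<and> k < G x) * u l * u x
        + of_bool (x \<noteq> l \<and> T x < T l \<and> k < G x) * u x * u l
        = of_bool (x \<noteq> l \<and> k < G x) * c * u x"
        unfolding c_def by (cases "x = l") (auto simp: algebra_simps)
    qed simp
    finally show ?thesis .
  qed
  have S2: "(\<Sum>a\<in>UNIV. of_bool (k < G a) * c * u a) = A + B + c"
  proof -
    have "(\<Sum>a\<in>UNIV. of_bool (k < G a) * c * u a) =
      (\<Sum>a\<in>UNIV. of_bool (a \<noteq> l \<and> k < G a) * c * u a + (if a = l then c * u a else 0))"
      by (rule sum.cong) (auto simp: Gl kd)
    also have "\<dots> = A + B + c * c" unfolding AB by (simp add: sum.distrib c_def)
    finally show ?thesis by simp
  qed
  have "crossQ T G' u = crossQ T G v"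
    unfolding crossQ_def L R sv S2
    by (simp add: algebra_simps)
  then show ?thesis unfolding G'_def v_def k_def d_def .
qed
lemma letters_ne:
  fixes p :: "'a::finite perm2"
  assumes "CARD('a) \<ge> 3" "is_perm2 p" "irreducible2 p"
  shows "letter (fst p) CARD('a) \<noteq> letter (snd p) CARD('a)"
proof
  assume eq: "letter (fst p) CARD('a) = letter (snd p) CARD('a)"
  define x where "x = letter (fst p) CARD('a)"
  have bT: "bij_betw (fst p) UNIV {1..CARD('a)}" and bG: "bij_betw (snd p) UNIV {1..CARD('a)}"
    using assms(2) unfolding is_perm2_def by auto
  have d1: "CARD('a) \<in> {1..CARD('a)}" using assms(1) by auto
  have Tx: "fst p x = CARD('a)" using letter_val[OF bT d1] x_def by simp
  have Gx: "snd p x = CARD('a)" using letter_val[OF bG d1] x_def eq by simp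
  have "{a. fst p a \<le> CARD('a) - 1} = {a. a \<noteq> x}"
  proof -
    show ?thesis
    proof (rule set_eqI)
      fix a
      have "fst p a \<le> CARD('a)" using bT unfolding bij_betw_def by auto
      moreover have "fst p a = CARD('a) \<longleftrightarrow> a = x"
        using bT Tx unfolding bij_betw_def inj_on_def by auto
      ultimately show "a \<in> {a. fst p a \<le> CARD('a) - 1} \<longleftrightarrow> a \<in> {a. a \<noteq> x}"
        using assms(1) by auto
    qed
  qed
  moreover have "{a. snd p a \<le> CARD('a) - 1} = {a. a \<noteq> x}"
  proof -
    show ?thesis
    proof (rule set_eqI)
      fix a
      have "snd p a \<le> CARD('a)" using bG unfolding bij_betw_def by auto
      moreover have "snd p a = CARD('a) \<longleftrightarrow> a = x"
        using bG Gx unfolding bij_betw_def inj_on_def by auto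
      ultimately show "a \<in> {a. snd p a \<le> CARD('a) - 1} \<longleftrightarrow> a \<in> {a. a \<noteq> x}"
        using assms(1) by auto
    qed
  qed
  moreover have "1 \<le> CARD('a) - 1 \<and> CARD('a) - 1 < CARD('a)" using assms(1) by auto
  ultimately show False using assms(3) unfolding irreducible2_def by metis
qed

theorem lemma2p11:
  fixes p p' :: "'a::finite perm2" and w l :: 'a
  assumes "CARD('a) \<ge> 3"
    and "is_perm2 p" and "irreducible2 p"
    and "rauzy_arrow p p' w l"
  shows "\<forall>u :: 'a \<Rightarrow> 2. Qform p' u = Qform p (vecmat u (mod2_mat (Bmat w l)))"
proof
  fix u :: "'a \<Rightarrow> 2"
  have bT: "bij_betw (fst p) UNIV {1..CARD('a)}" and bG: "bij_betw (snd p) UNIV {1..CARD('a)}"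
    using assms(2) unfolding is_perm2_def by auto
  have ne: "letter (fst p) CARD('a) \<noteq> letter (snd p) CARD('a)"
    using letters_ne[OF assms(1-3)] .
  from assms(4) show "Qform p' u = Qform p (vecmat u (mod2_mat (Bmat w l)))"
    unfolding rauzy_arrow_def
  proof (elim disjE conjE)
    assume p': "p' = rauzy_top p" and w: "w = letter (fst p) CARD('a)" and l: "l = letter (snd p) CARD('a)"
    have "Qform p' u = crossQ (fst p) (rauzy_row CARD('a) (snd p w) (snd p)) u"
      unfolding Qform_cross p' rauzy_top_def w by simp
    also have "\<dots> = crossQ (fst p) (snd p) (vecmat u (mod2_mat (Bmat w l)))"
      by (rule main_generic[OF bT bG w l]) (use ne w l in simp)
    finally show ?thesis unfolding Qform_cross .
  next
    assume p': "p' = rauzy_bot p" and w: "w = letter (snd p) CARD('a)" and l: "l = letter (fst p) CARD('a)"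
    have "Qform p' u = crossQ (snd p) (rauzy_row CARD('a) (fst p w) (fst p)) u"
      unfolding Qform_cross p' rauzy_bot_def w by (simp add: crossQ_sym)
    also have "\<dots> = crossQ (snd p) (fst p) (vecmat u (mod2_mat (Bmat w l)))"
      by (rule main_generic[OF bG bT w l]) (use ne w l in simp)
    finally show ?thesis unfolding Qform_cross by (simp add: crossQ_sym)
  qed
qed
end
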